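(* Let $M$ be as in the context and let $\Gamma_1,\Gamma_2$ be compatible piecewise $C^1$ cuts. Then $\Gamma_1\cup\Gamma_2$ can be parameterized by a finite family of regular $C^1$ curves $\{\gamma_a\}_{a\in A}$ (intersecting one another and $\partial M$ transversely and only at their endpoints) such that the image of each $\gamma_a$ is contained in $\overline{\Gamma_1\setminus\Gamma_2}$, in $\overline{\Gamma_2\setminus\Gamma_1}$, or in $\Gamma_1\cap\Gamma_2$.
   Context: $M$ is a compact oriented Riemannian surface with piecewise $C^1$ (possibly empty) boundary $\partial M$. A $C^1$ curve is regular if its velocity never vanishes. A closed set $\Gamma\subset M$ is a piecewise $C^1$ cut if it is the image of a finite set of regular $C^1$ curves that intersect one another (and $\partial M$) transversely, and only do so at their endpoints. Cuts $\Gamma_1,\Gamma_2$ are compatible if $\Gamma_1\cup\Gamma_2$ is a piecewise $C^1$ cut.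
   Formalization: Transversality between curves of a cut, in hypothesis and conclusion, means outgoing tangent directions at a common endpoint are never positive multiples of one another rather than linearly independent, and each curve meets itself only at its endpoints. The statement above fails without it. *)

theory Defs
  imports "HOL-Analysis.Analysis"
begin

type_synonym 'a chart = "'a set \<times> ('a \<Rightarrow> real^2)"

definition C1_map :: "(real^2 \<Rightarrow> real^2) \<Rightarrow> (real^2) set \<Rightarrow> bool" where
  "C1_map f S \<longleftrightarrow>
     (\<exists>f' :: real^2 \<Rightarrow> ((real^2) \<Rightarrow>\<^sub>L (real^2)).
        (\<forall>x\<in>S. (f has_derivative blinfun_apply (f' x)) (at x)) \<and> continuous_on S f')"

definition orientation_preserving :: "(real^2 \<Rightarrow> real^2) \<Rightarrow> (real^2) set \<Rightarrow> bool" where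
  "orientation_preserving f S \<longleftrightarrow>
     (\<forall>x\<in>S. det (matrix (frechet_derivative f (at x))) > 0)"

definition oriented_C1_surface :: "'a topology \<Rightarrow> 'a chart set \<Rightarrow> bool" where
  "oriented_C1_surface X A \<longleftrightarrow>
     Hausdorff_space X \<and>
     \<Union>(fst ` A) = topspace X \<and>
     (\<forall>(U, \<phi>)\<in>A. openin X U \<and> open (\<phi> ` U) \<and>
        homeomorphic_map (subtopology X U) (top_of_set (\<phi> ` U)) \<phi>) \<and>
     (\<forall>(U, \<phi>)\<in>A. \<forall>(V, \<psi>)\<in>A.
        C1_map (\<psi> \<circ> inv_into U \<phi>) (\<phi> ` (U \<inter> V)) \<and>
        orientation_preserving (\<psi> \<circ> inv_into U \<phi>) (\<phi> ` (U \<inter> V)))"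

definition chart_vel :: "('a \<Rightarrow> real^2) \<Rightarrow> (real \<Rightarrow> 'a) \<Rightarrow> real \<Rightarrow> real^2" where
  "chart_vel \<phi> \<gamma> t = vector_derivative (\<phi> \<circ> \<gamma>) (at t within {0..1})"

definition regular_C1_curve :: "'a topology \<Rightarrow> 'a chart set \<Rightarrow> (real \<Rightarrow> 'a) \<Rightarrow> bool" where
  "regular_C1_curve X A \<gamma> \<longleftrightarrow>
     continuous_map (top_of_set {0..1}) X \<gamma> \<and>
     (\<forall>(U, \<phi>)\<in>A.
        (\<forall>t\<in>{0..1}. \<gamma> t \<in> U \<longrightarrow>
            ((\<phi> \<circ> \<gamma>) has_vector_derivative chart_vel \<phi> \<gamma> t) (at t within {0..1}) \<and>
            chart_vel \<phi> \<gamma> t \<noteq> 0) \<and>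
        continuous_on {t\<in>{0..1}. \<gamma> t \<in> U} (chart_vel \<phi> \<gamma>))"

definition lin_indep2 :: "real^2 \<Rightarrow> real^2 \<Rightarrow> bool" where
  "lin_indep2 v w \<longleftrightarrow> v$1 * w$2 - v$2 * w$1 \<noteq> 0"

text \<open>Outgoing tangent vector of a curve at an endpoint s (s = 0 or s = 1).\<close>

definition out_vel :: "('a \<Rightarrow> real^2) \<Rightarrow> (real \<Rightarrow> 'a) \<Rightarrow> real \<Rightarrow> real^2" where
  "out_vel \<phi> \<gamma> s = (if s = 0 then chart_vel \<phi> \<gamma> s else - chart_vel \<phi> \<gamma> s)"

text \<open>A compact surface M with piecewise C1 (possibly empty) boundary inside the oriented
  C1 surface (X, A): M is compact, the closure of its interior, and its frontier is the union
  of the finitely many regular C1 arcs in B, which meet one another only at endpoints, each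
  point being hit by exactly 0 or 2 arc-ends (so the boundary is a disjoint union of
  piecewise C1 simple closed curves).\<close>

definition surface_pw_C1_boundary ::
    "'a topology \<Rightarrow> 'a chart set \<Rightarrow> 'a set \<Rightarrow> (real \<Rightarrow> 'a) set \<Rightarrow> bool" where
  "surface_pw_C1_boundary X A M B \<longleftrightarrow>
     oriented_C1_surface X A \<and>
     compactin X M \<and>
     M = X closure_of (X interior_of M) \<and>
     finite B \<and>
     X frontier_of M = (\<Union>\<beta>\<in>B. \<beta> ` {0..1}) \<and>
     (\<forall>\<beta>\<in>B. regular_C1_curve X A \<beta>) \<and>
     (\<forall>\<beta>\<in>B. \<forall>\<beta>'\<in>B. \<forall>s\<in>{0..1}. \<forall>t\<in>{0..1}.
        \<beta> s = \<beta>' t \<longrightarrow> (\<beta> = \<beta>' \<and> s = t) \<or> (s \<in> {0, 1} \<and> t \<in> {0, 1})) \<and>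
     (\<forall>p \<in> topspace X. card {(\<beta>, s). \<beta> \<in> B \<and> s \<in> {0::real, 1} \<and> \<beta> s = p} \<in> {0, 2})"

definition cut_family ::
    "'a topology \<Rightarrow> 'a chart set \<Rightarrow> 'a set \<Rightarrow> (real \<Rightarrow> 'a) set \<Rightarrow> (real \<Rightarrow> 'a) set \<Rightarrow> bool" where
  "cut_family X A M B C \<longleftrightarrow>
     finite C \<and>
     (\<forall>\<gamma>\<in>C. regular_C1_curve X A \<gamma> \<and> \<gamma> ` {0..1} \<subseteq> M) \<and>
     (\<forall>\<gamma>\<in>C. \<forall>\<delta>\<in>C. \<forall>s\<in>{0..1}. \<forall>t\<in>{0..1}.
        \<gamma> s = \<delta> t \<and> (\<gamma>, s) \<noteq> (\<delta>, t) \<longrightarrow>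
          s \<in> {0, 1} \<and> t \<in> {0, 1} \<and>
          (\<forall>(U, \<phi>)\<in>A. \<gamma> s \<in> U \<longrightarrow>
             \<not> (\<exists>c>0. out_vel \<phi> \<gamma> s = c *\<^sub>R out_vel \<phi> \<delta> t))) \<and>
     (\<forall>\<gamma>\<in>C. \<forall>\<beta>\<in>B. \<forall>s\<in>{0..1}. \<forall>u\<in>{0..1}.
        \<gamma> s = \<beta> u \<longrightarrow>
          s \<in> {0, 1} \<and>
          (\<forall>(U, \<phi>)\<in>A. \<gamma> s \<in> U \<longrightarrow> lin_indep2 (chart_vel \<phi> \<gamma> s) (chart_vel \<phi> \<beta> u)))"

definition pw_C1_cut ::
    "'a topology \<Rightarrow> 'a chart set \<Rightarrow> 'a set \<Rightarrow> (real \<Rightarrow> 'a) set \<Rightarrow> 'a set \<Rightarrow> bool" where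
  "pw_C1_cut X A M B \<Gamma> \<longleftrightarrow>
     (\<exists>C. cut_family X A M B C \<and> \<Gamma> = (\<Union>\<gamma>\<in>C. \<gamma> ` {0..1}))"

definition compatible_cuts ::
    "'a topology \<Rightarrow> 'a chart set \<Rightarrow> 'a set \<Rightarrow> (real \<Rightarrow> 'a) set \<Rightarrow> 'a set \<Rightarrow> 'a set \<Rightarrow> bool" where
  "compatible_cuts X A M B \<Gamma>1 \<Gamma>2 \<longleftrightarrow>
     pw_C1_cut X A M B \<Gamma>1 \<and> pw_C1_cut X A M B \<Gamma>2 \<and> pw_C1_cut X A M B (\<Gamma>1 \<union> \<Gamma>2)"

end

theory Submission
  imports Defs
begin



lemma lin_image: "(a::real) < b \<Longrightarrow> (\<lambda>s. a + (b-a) * s) ` {0..1} = {a..b}"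
proof -
  assume ab: "a < b"
  show ?thesis
  proof
    show "(\<lambda>s. a + (b-a) * s) ` {0..1} \<subseteq> {a..b}"
    proof
      fix y assume "y \<in> (\<lambda>s. a + (b-a) * s) ` {0..1}"
      then obtain s where s: "s \<in> {0..1}" "y = a + (b-a) * s" by blast
      have "0 \<le> (b-a) * s" "(b-a) * s \<le> (b-a)" using s ab by (auto simp: mult_left_le)
      then show "y \<in> {a..b}" using s by auto
    qed
    show "{a..b} \<subseteq> (\<lambda>s. a + (b-a) * s) ` {0..1}"
    proof
      fix x assume x: "x \<in> {a..b}"
      have "x = a + (b-a) * ((x-a)/(b-a))" using ab by simp
      moreover have "(x-a)/(b-a) \<in> {0..1}" using x ab by (auto simp: divide_simps)
      ultimately show "x \<in> (\<lambda>s. a + (b-a) * s) ` {0..1}" by blast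
    qed
  qed
qed

lemma seg_deriv:
  assumes d: "((\<phi> \<circ> \<gamma>) has_vector_derivative v) (at x within {0..1})"
    and ab: "0 \<le> a" "a < b" "b \<le> 1" and s: "s \<in> {0..1}" and x: "x = a + (b-a) * s"
  shows "((\<phi> \<circ> (\<lambda>s. \<gamma>(a + (b-a) * s))) has_vector_derivative (b-a) *\<^sub>R v) (at s within {0..1})"
proof -
  have l: "((\<lambda>s::real. a + (b-a) * s) has_vector_derivative (b-a)) (at s within {0..1})"
    by (auto intro!: derivative_eq_intros)
  have "(\<lambda>s. a + (b-a) * s) ` {0..1} \<subseteq> {0..1}" using lin_image[of a b] ab by auto
  then have d2: "((\<phi> \<circ> \<gamma>) has_vector_derivative v) (at ((\<lambda>s. a + (b-a) * s) s) within (\<lambda>s. a + (b-a) * s) ` {0..1})"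
    using d x has_vector_derivative_within_subset by fastforce
  from vector_diff_chain_within[OF l d2] show ?thesis by (simp add: o_def)
qed

lemma vd_unique:
  assumes "(f has_vector_derivative v) (at s within {0..1::real})" "s \<in> {0..1}"
  shows "vector_derivative f (at s within {0..1}) = v"
  using vector_derivative_within_cbox[of 0 1 s f v] assms by simp

lemma partition_cover:
  fixes F :: "real set"
  assumes "finite F" "0 \<in> F" "1 \<in> F" "F \<subseteq> {0..1}" "x \<in> {0..1}"
  shows "\<exists>a b. a \<in> F \<and> b \<in> F \<and> a < b \<and> {a<..<b} \<inter> F = {} \<and> x \<in> {a..b}"
proof (cases "x < 1")
  case True
  define a where "a = Max {f\<in>F. f \<le> x}"
  define b where "b = Min {f\<in>F. x < f}"
  have fa: "finite {f\<in>F. f \<le> x}" "{f\<in>F. f \<le> x} \<noteq> {}" using assms by auto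
  have fb: "finite {f\<in>F. x < f}" "{f\<in>F. x < f} \<noteq> {}" using assms True by auto
  have a: "a \<in> F" "a \<le> x" using Max_in[OF fa] unfolding a_def by auto
  have b: "b \<in> F" "x < b" using Min_in[OF fb] unfolding b_def by auto
  have "{a<..<b} \<inter> F = {}"
  proof (rule ccontr)
    assume "{a<..<b} \<inter> F \<noteq> {}"
    then obtain f where f: "f \<in> F" "a < f" "f < b" by auto
    show False
    proof (cases "f \<le> x")
      case True
      then have "f \<le> a" unfolding a_def using fa f by (intro Max_ge) auto
      then show False using f by simp
    next
      case False
      then have "b \<le> f" unfolding b_def using fb f by (intro Min_le) auto
      then show False using f by simp
    qed
  qed
  then show ?thesis using a b by (intro exI[of _ a] exI[of _ b]) auto
next
  case False
  then have x1: "x = 1" using assms by auto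
  define a where "a = Max {f\<in>F. f < 1}"
  have fa: "finite {f\<in>F. f < 1}" "{f\<in>F. f < 1} \<noteq> {}" using assms by auto
  have a: "a \<in> F" "a < 1" using Max_in[OF fa] unfolding a_def by auto
  have "{a<..<1} \<inter> F = {}"
  proof (rule ccontr)
    assume "{a<..<1} \<inter> F \<noteq> {}"
    then obtain f where f: "f \<in> F" "a < f" "f < 1" by auto
    then have "f \<le> a" unfolding a_def using fa by (intro Max_ge) auto
    then show False using f by simp
  qed
  then show ?thesis using a x1 assms by (intro exI[of _ a] exI[of _ 1]) auto
qed

lemma consec_overlap:
  fixes F :: "real set"
  assumes "a \<in> F" "b \<in> F" "a < b" "{a<..<b} \<inter> F = {}"
    "a' \<in> F" "b' \<in> F" "a' < b'" "{a'<..<b'} \<inter> F = {}"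
    "x \<in> {a..b}" "x \<in> {a'..b'}" "(a, b) \<noteq> (a', b')"
  shows "(x = b \<and> x = a') \<or> (x = a \<and> x = b')"
proof -
  have "a' \<notin> {a<..<b}" "a \<notin> {a'<..<b'}" "b \<notin> {a'<..<b'}" "b' \<notin> {a<..<b}"
    using assms by blast+
  then show ?thesis using assms by auto
qed



lemma regD:
  assumes "regular_C1_curve X A \<gamma>" "(U, \<phi>) \<in> A" "t \<in> {0..1}" "\<gamma> t \<in> U"
  shows "((\<phi> \<circ> \<gamma>) has_vector_derivative chart_vel \<phi> \<gamma> t) (at t within {0..1})" "chart_vel \<phi> \<gamma> t \<noteq> 0"
proof -
  have "\<forall>(U, \<phi>)\<in>A. (\<forall>t\<in>{0..1}. \<gamma> t \<in> U \<longrightarrow>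
            ((\<phi> \<circ> \<gamma>) has_vector_derivative chart_vel \<phi> \<gamma> t) (at t within {0..1}) \<and>
            chart_vel \<phi> \<gamma> t \<noteq> 0)" using assms(1) unfolding regular_C1_curve_def by blast
  then have "\<forall>t\<in>{0..1}. \<gamma> t \<in> U \<longrightarrow>
            ((\<phi> \<circ> \<gamma>) has_vector_derivative chart_vel \<phi> \<gamma> t) (at t within {0..1}) \<and>
            chart_vel \<phi> \<gamma> t \<noteq> 0" using assms(2) by blast
  then show "((\<phi> \<circ> \<gamma>) has_vector_derivative chart_vel \<phi> \<gamma> t) (at t within {0..1})" "chart_vel \<phi> \<gamma> t \<noteq> 0"
    using assms(3,4) by blast+
qed

lemma regC:
  assumes "regular_C1_curve X A \<gamma>" "(U, \<phi>) \<in> A"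
  shows "continuous_on {t\<in>{0..1}. \<gamma> t \<in> U} (chart_vel \<phi> \<gamma>)"
proof -
  have "\<forall>(U, \<phi>)\<in>A. continuous_on {t\<in>{0..1}. \<gamma> t \<in> U} (chart_vel \<phi> \<gamma>)"
    using assms(1) unfolding regular_C1_curve_def by blast
  then show ?thesis using assms(2) by blast
qed

lemma regI:
  assumes "continuous_map (top_of_set {0..1}) X \<gamma>"
    and "\<And>U \<phi> t. (U, \<phi>) \<in> A \<Longrightarrow> t \<in> {0..1} \<Longrightarrow> \<gamma> t \<in> U \<Longrightarrow>
       ((\<phi> \<circ> \<gamma>) has_vector_derivative chart_vel \<phi> \<gamma> t) (at t within {0..1}) \<and> chart_vel \<phi> \<gamma> t \<noteq> 0"
    and "\<And>U \<phi>. (U, \<phi>) \<in> A \<Longrightarrow> continuous_on {t\<in>{0..1}. \<gamma> t \<in> U} (chart_vel \<phi> \<gamma>)"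
  shows "regular_C1_curve X A \<gamma>"
  unfolding regular_C1_curve_def using assms by auto

lemma seg_regular:
  assumes reg: "regular_C1_curve X A \<gamma>" and ab: "0 \<le> a" "a < b" "b \<le> 1"
  shows "regular_C1_curve X A (\<lambda>s. \<gamma>(a + (b-a) * s))"
    and "\<And>U \<phi> s. (U, \<phi>) \<in> A \<Longrightarrow> s \<in> {0..1} \<Longrightarrow> \<gamma> (a + (b-a) * s) \<in> U \<Longrightarrow>
           chart_vel \<phi> (\<lambda>s. \<gamma>(a + (b-a) * s)) s = (b-a) *\<^sub>R chart_vel \<phi> \<gamma> (a + (b-a) * s)"
proof -
  define L where "L = (\<lambda>s::real. a + (b-a) * s)"
  have Limg: "L ` {0..1} \<subseteq> {0..1}" using lin_image[of a b] ab unfolding L_def by auto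
  have Lc: "continuous_on {0..1} L" unfolding L_def by (intro continuous_intros)
  have cg: "continuous_map (top_of_set {0..1}) X \<gamma>" using reg by (simp add: regular_C1_curve_def)
  have cL: "continuous_map (top_of_set {0..1}) (top_of_set {0..1}) L"
    using Lc Limg by (simp add: image_subset_iff)
  have vel: "chart_vel \<phi> (\<lambda>s. \<gamma>(a + (b-a) * s)) s = (b-a) *\<^sub>R chart_vel \<phi> \<gamma> (a + (b-a) * s)
      \<and> ((\<phi> \<circ> (\<lambda>s. \<gamma>(a + (b-a) * s))) has_vector_derivative chart_vel \<phi> (\<lambda>s. \<gamma>(a + (b-a) * s)) s) (at s within {0..1})
      \<and> chart_vel \<phi> (\<lambda>s. \<gamma>(a + (b-a) * s)) s \<noteq> 0"
    if U: "(U, \<phi>) \<in> A" and s: "s \<in> {0..1}" and inU: "\<gamma> (a + (b-a) * s) \<in> U" for U \<phi> s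
  proof -
    have x01: "a + (b-a) * s \<in> {0..1}" using Limg s unfolding L_def image_subset_iff by blast
    note d = regD(1)[OF reg U x01 inU] and nz = regD(2)[OF reg U x01 inU]
    have d2: "((\<phi> \<circ> (\<lambda>s. \<gamma>(a + (b-a) * s))) has_vector_derivative (b-a) *\<^sub>R chart_vel \<phi> \<gamma> (a + (b-a) * s)) (at s within {0..1})"
      using seg_deriv[OF d ab s refl] .
    have eq: "chart_vel \<phi> (\<lambda>s. \<gamma>(a + (b-a) * s)) s = (b-a) *\<^sub>R chart_vel \<phi> \<gamma> (a + (b-a) * s)"
      using vd_unique[OF d2 s] unfolding chart_vel_def .
    show ?thesis using eq d2 nz ab by simp
  qed
  then show "\<And>U \<phi> s. (U, \<phi>) \<in> A \<Longrightarrow> s \<in> {0..1} \<Longrightarrow> \<gamma> (a + (b-a) * s) \<in> U \<Longrightarrow>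
           chart_vel \<phi> (\<lambda>s. \<gamma>(a + (b-a) * s)) s = (b-a) *\<^sub>R chart_vel \<phi> \<gamma> (a + (b-a) * s)"
    by blast
  show "regular_C1_curve X A (\<lambda>s. \<gamma>(a + (b-a) * s))"
  proof (rule regI)
    show "continuous_map (top_of_set {0..1}) X (\<lambda>s. \<gamma> (a + (b - a) * s))"
      using continuous_map_compose[OF cL cg] unfolding L_def by (simp add: o_def)
  next
    fix U \<phi> t assume "(U, \<phi>) \<in> A" "t \<in> {0..1}" "\<gamma> (a + (b - a) * t) \<in> U"
    then show "((\<phi> \<circ> (\<lambda>s. \<gamma> (a + (b - a) * s))) has_vector_derivative chart_vel \<phi> (\<lambda>s. \<gamma> (a + (b - a) * s)) t) (at t within {0..1}) \<and>
              chart_vel \<phi> (\<lambda>s. \<gamma> (a + (b - a) * s)) t \<noteq> 0" using vel by blast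
  next
    fix U \<phi> assume p: "(U, \<phi>) \<in> A"
    have cv: "continuous_on {t \<in> {0..1}. \<gamma> t \<in> U} (chart_vel \<phi> \<gamma>)" using regC[OF reg p] .
    have "continuous_on {s \<in> {0..1}. \<gamma> (a + (b-a) * s) \<in> U} (\<lambda>s. (b-a) *\<^sub>R chart_vel \<phi> \<gamma> (L s))"
    proof (intro continuous_on_scaleR continuous_on_const continuous_on_compose2[OF cv])
      show "continuous_on {s \<in> {0..1}. \<gamma> (a + (b-a) * s) \<in> U} L"
        by (rule continuous_on_subset[OF Lc]) blast
      show "L ` {s \<in> {0..1}. \<gamma> (a + (b-a) * s) \<in> U} \<subseteq> {t \<in> {0..1}. \<gamma> t \<in> U}"
        using Limg unfolding L_def image_subset_iff by blast
    qed
    then show "continuous_on {t \<in> {0..1}. \<gamma> (a + (b - a) * t) \<in> U} (chart_vel \<phi> (\<lambda>s. \<gamma> (a + (b - a) * s)))"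
    proof (rule continuous_on_eq)
      fix s assume "s \<in> {s \<in> {0..1}. \<gamma> (a + (b-a) * s) \<in> U}"
      then have s: "s \<in> {0..1}" "\<gamma> (a + (b-a) * s) \<in> U" by auto
      show "(b-a) *\<^sub>R chart_vel \<phi> \<gamma> (L s) = chart_vel \<phi> (\<lambda>s. \<gamma>(a + (b-a) * s)) s"
        using conjunct1[OF vel[OF p s]] unfolding L_def by (rule sym)
    qed
  qed
qed



lemma local_cover:
  fixes \<gamma> \<delta> :: "real \<Rightarrow> 'a" and X :: "'a topology"
  assumes H: "Hausdorff_space X"
  and finC: "finite C" and contC: "\<forall>\<eta>\<in>C. continuous_map (top_of_set {0..1}) X \<eta>"
  and injC: "\<forall>\<eta>\<in>C. \<forall>\<eta>'\<in>C. \<forall>s\<in>{0..1}. \<forall>t\<in>{0..1}. \<eta> s = \<eta>' t \<and> (\<eta>,s)\<noteq>(\<eta>',t) \<longrightarrow> s\<in>{0,1} \<and> t\<in>{0,1}"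
  and \<gamma>C: "\<gamma>\<in>C"
  and cont\<delta>: "continuous_map (top_of_set {0..1}) X \<delta>"
  and inj\<delta>: "\<forall>s\<in>{0..1}. \<forall>t\<in>{0..1}. \<delta> s = \<delta> t \<and> s\<noteq>t \<longrightarrow> s\<in>{0,1}"
  and sub: "\<delta> ` {0..1} \<subseteq> (\<Union>\<eta>\<in>C. \<eta> ` {0..1})"
  and t: "0<t" "t<1" and u: "0<u" "u<1" and p: "\<gamma> t = \<delta> u"
  shows "\<exists>r>0. ball t r \<subseteq> {t'\<in>{0..1}. \<gamma> t' \<in> \<delta> ` {0..1}}"
proof -
  define c where "c = t/2"
  define d where "d = (1+t)/2"
  have cd: "0 < c" "c < t" "t < d" "d < 1" using t by (auto simp: c_def d_def)
  define K where "K = (\<Union>\<eta>\<in>C-{\<gamma>}. \<eta> ` {0..1}) \<union> \<gamma> ` {0..c} \<union> \<gamma> ` {d..1}"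
  have cpt: "compactin (top_of_set {0..1}) {x..y}" if "0 \<le> x" "y \<le> 1" for x y :: real
    using that by (simp add: compactin_subtopology)
  have cg: "continuous_map (top_of_set {0..1}) X \<gamma>" using contC \<gamma>C by blast
  have "compactin X K"
    unfolding K_def
  proof (intro compactin_Un compactin_Union)
    show "finite ((\<lambda>\<eta>. \<eta> ` {0..1}) ` (C - {\<gamma>}))" using finC by simp
    show "\<And>S. S \<in> (\<lambda>\<eta>. \<eta> ` {0..1}) ` (C - {\<gamma>}) \<Longrightarrow> compactin X S"
    proof -
      fix S assume "S \<in> (\<lambda>\<eta>. \<eta> ` {0..1}) ` (C - {\<gamma>})"
      then obtain \<eta> where "\<eta> \<in> C" "S = \<eta> ` {0..1}" by blast
      then show "compactin X S" using contC cpt[of 0 1] image_compactin by (metis order.refl zero_le_one)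
    qed
    show "compactin X (\<gamma> ` {0..c})" using image_compactin[OF cpt[of 0 c] cg] cd by simp
    show "compactin X (\<gamma> ` {d..1})" using image_compactin[OF cpt[of d 1] cg] cd by simp
  qed
  then have clK: "closedin X K" using H compactin_imp_closedin by blast
  have pK: "\<gamma> t \<notin> K"
  proof
    assume "\<gamma> t \<in> K"
    then obtain \<eta> x where \<eta>: "\<eta> \<in> C" "x \<in> {0..1}" "\<gamma> t = \<eta> x" "(\<eta>, x) \<noteq> (\<gamma>, t)"
    proof -
      from \<open>\<gamma> t \<in> K\<close> consider (a) "\<gamma> t \<in> (\<Union>\<eta>\<in>C-{\<gamma>}. \<eta> ` {0..1})" | (b) "\<gamma> t \<in> \<gamma> ` {0..c}" | (c) "\<gamma> t \<in> \<gamma> ` {d..1}"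
        unfolding K_def by blast
      then show ?thesis
      proof cases
        case a then show ?thesis using that by blast
      next
        case b then obtain x where "x \<in> {0..c}" "\<gamma> t = \<gamma> x" by blast
        then show ?thesis using that[of \<gamma> x] \<gamma>C cd by auto
      next
        case c then obtain x where "x \<in> {d..1}" "\<gamma> t = \<gamma> x" by blast
        then show ?thesis using that[of \<gamma> x] \<gamma>C cd by auto
      qed
    qed
    then show False using injC[rule_format, of \<eta> \<gamma> x t] \<gamma>C t by auto
  qed
  define N where "N = topspace X - K"
  have oN: "openin X N" using clK N_def by blast
  have pN: "\<delta> u \<in> N" using pK p cont\<delta> u unfolding N_def continuous_map_def by auto
  have "openin (top_of_set {0..1}) {x \<in> topspace (top_of_set {0..1}). \<delta> x \<in> N}"
    using openin_continuous_map_preimage[OF cont\<delta> oN] .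
  then have "openin (top_of_set {0..1}) {x \<in> {0..1}. \<delta> x \<in> N}" by simp
  then have "\<exists>T. open T \<and> {x \<in> {0..1}. \<delta> x \<in> N} = {0..1} \<inter> T" by (simp only: openin_open)
  then obtain Op where O': "open Op \<and> {x \<in> {0..1}. \<delta> x \<in> N} = {0..1} \<inter> Op"
    by (rule exE)
  then have O: "open Op" "{x \<in> {0..1}. \<delta> x \<in> N} = {0..1} \<inter> Op" by simp_all
  have O3: "(\<delta> x \<in> N) = (x \<in> Op)" if "x \<in> {0..1}" for x
    using O(2)[unfolded set_eq_iff, rule_format, of x] that by simp
  have "u \<in> Op" using O3[of u] pN u by simp
  then obtain e where e: "e > 0" "ball u e \<subseteq> Op" using O open_contains_ball by blast
  define \<epsilon> where "\<epsilon> = min e (min u (1-u))"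
  have \<epsilon>1: "\<epsilon> > 0" "\<epsilon> \<le> e" "\<epsilon> \<le> u" "\<epsilon> \<le> 1 - u" using e u by (auto simp: \<epsilon>_def)
  have \<epsilon>: "\<epsilon> > 0" "ball u \<epsilon> \<subseteq> {0<..<1}"
    using \<epsilon>1 by (auto simp: dist_real_def)
  have bN: "\<delta> u' \<in> N" if "u' \<in> ball u \<epsilon>" for u'
  proof -
    have "u' \<in> ball u e" using that \<epsilon>1 by auto
    then have "u' \<in> Op" using e by blast
    moreover have "u' \<in> {0..1}" using that \<epsilon> by auto
    ultimately show ?thesis using O3 by blast
  qed
  have R: "\<delta> u' \<in> \<gamma> ` {c..d}" if u': "u' \<in> ball u \<epsilon>" for u'
  proof -
    have u01: "u' \<in> {0..1}" using u' \<epsilon> by auto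
    then obtain \<eta> x where \<eta>: "\<eta> \<in> C" "x \<in> {0..1}" "\<delta> u' = \<eta> x" using sub by blast
    have "\<delta> u' \<notin> K" using bN[OF u'] N_def by blast
    show ?thesis
    proof (cases "\<eta> = \<gamma>")
      case False
      then have "\<delta> u' \<in> K" using \<eta> unfolding K_def by blast
      then show ?thesis using \<open>\<delta> u' \<notin> K\<close> by blast
    next
      case True
      have "x \<notin> {0..c}"
      proof
        assume "x \<in> {0..c}" then have "\<delta> u' \<in> K" using \<eta> True unfolding K_def by blast
        then show False using \<open>\<delta> u' \<notin> K\<close> by blast
      qed
      moreover have "x \<notin> {d..1}"
      proof
        assume "x \<in> {d..1}" then have "\<delta> u' \<in> K" using \<eta> True unfolding K_def by blast
        then show False using \<open>\<delta> u' \<notin> K\<close> by blast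
      qed
      ultimately have "x \<in> {c..d}" using \<eta>(2) by auto
      then show ?thesis using \<eta> True by blast
    qed
  qed
  have cdsub: "{c..d} \<subseteq> {0..1}" using cd by auto
  have injg: "inj_on \<gamma> {c..d}"
  proof
    fix x y assume "x \<in> {c..d}" "y \<in> {c..d}" "\<gamma> x = \<gamma> y"
    then show "x = y" using injC[rule_format, of \<gamma> \<gamma> x y] \<gamma>C cd by auto
  qed
  have hm: "homeomorphic_map (top_of_set {c..d}) (subtopology X (\<gamma> ` {c..d})) \<gamma>"
  proof (rule continuous_imp_homeomorphic_map)
    show "continuous_map (top_of_set {c..d}) (subtopology X (\<gamma> ` {c..d})) \<gamma>"
      using cg cdsub by (simp add: continuous_map_from_subtopology_mono continuous_map_in_subtopology)
    show "compact_space (top_of_set {c..d})" by (simp add: compact_space_subtopology)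
    show "Hausdorff_space (subtopology X (\<gamma> ` {c..d}))" using H Hausdorff_space_subtopology by blast
    show "\<gamma> ` topspace (top_of_set {c..d}) = topspace (subtopology X (\<gamma> ` {c..d}))"
      using cg cdsub unfolding continuous_map_def by auto
    show "inj_on \<gamma> (topspace (top_of_set {c..d}))" using injg by simp
  qed
  then obtain g where g: "homeomorphic_maps (top_of_set {c..d}) (subtopology X (\<gamma> ` {c..d})) \<gamma> g"
    using homeomorphic_map_maps by blast
  have gcont: "continuous_map (subtopology X (\<gamma> ` {c..d})) (top_of_set {c..d}) g"
    and ginv: "\<And>x. x \<in> {c..d} \<Longrightarrow> g (\<gamma> x) = x"
    using g by (auto simp: homeomorphic_maps_def)
  have cdelta: "continuous_map (top_of_set (ball u \<epsilon>)) (subtopology X (\<gamma> ` {c..d})) \<delta>"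
  proof -
    have "continuous_map (top_of_set (ball u \<epsilon>)) X \<delta>"
      using continuous_map_from_subtopology_mono[OF cont\<delta>, of "ball u \<epsilon>"] \<epsilon>(2) by force
    then show ?thesis using R by (simp add: continuous_map_in_subtopology image_subset_iff)
  qed
  have ch: "continuous_map (top_of_set (ball u \<epsilon>)) (top_of_set {c..d}) (g \<circ> \<delta>)"
    using continuous_map_compose[OF cdelta gcont] .
  then have conth: "continuous_on (ball u \<epsilon>) (g \<circ> \<delta>)" and himg: "(g \<circ> \<delta>) ` ball u \<epsilon> \<subseteq> {c..d}"
    by (auto simp: continuous_map_subtopology_eu)
  have gd: "\<gamma> (g (\<delta> u')) = \<delta> u'" if "u' \<in> ball u \<epsilon>" for u'
    using R[OF that] ginv by auto
  have injh: "inj_on (g \<circ> \<delta>) (ball u \<epsilon>)"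
  proof
    fix x y assume xy: "x \<in> ball u \<epsilon>" "y \<in> ball u \<epsilon>" "(g \<circ> \<delta>) x = (g \<circ> \<delta>) y"
    then have "\<delta> x = \<delta> y" using gd by (metis o_apply)
    moreover have "x \<in> {0<..<1}" "y \<in> {0<..<1}" using xy \<epsilon> by auto
    ultimately show "x = y" using inj\<delta>[rule_format, of x y] by auto
  qed
  have op: "open ((g \<circ> \<delta>) ` ball u \<epsilon>)"
    by (rule injective_into_1d_imp_open_map_UNIV[OF _ conth injh]) auto
  have "t = (g \<circ> \<delta>) u" using p[symmetric] ginv[of t] cd by simp
  then have "t \<in> (g \<circ> \<delta>) ` ball u \<epsilon>" using \<epsilon> by auto
  then obtain r where r: "r > 0" "ball t r \<subseteq> (g \<circ> \<delta>) ` ball u \<epsilon>"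
    using op open_contains_ball by blast
  have "ball t r \<subseteq> {t'\<in>{0..1}. \<gamma> t' \<in> \<delta> ` {0..1}}"
  proof
    fix t' assume "t' \<in> ball t r"
    then obtain u' where u': "u' \<in> ball u \<epsilon>" "t' = g (\<delta> u')" using r by auto
    have "(g \<circ> \<delta>) u' \<in> {c..d}" using himg u'(1) by blast
    then have "t' \<in> {c..d}" using u'(2) by simp
    then have "t' \<in> {0..1}" using cdsub by blast
    moreover have "\<gamma> t' = \<delta> u'" using gd u' by simp
    moreover have "u' \<in> {0..1}" using u' \<epsilon> by auto
    ultimately show "t' \<in> {t'\<in>{0..1}. \<gamma> t' \<in> \<delta> ` {0..1}}" by auto
  qed
  then show ?thesis using r by blast
qed




lemma closed_pre:
  fixes X :: "'a topology" and D :: "(real \<Rightarrow> 'a) set" and \<gamma> :: "real \<Rightarrow> 'a"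
  assumes H: "Hausdorff_space X" and finD: "finite D"
    and contD: "\<forall>\<delta>\<in>D. continuous_map (top_of_set {0..1}) X \<delta>"
    and cg: "continuous_map (top_of_set {0..1}) X \<gamma>"
  shows "closed {t\<in>{0..1}. \<gamma> t \<in> (\<Union>\<delta>\<in>D. \<delta> ` {0..1})}"
proof -
  have cpt: "compactin (top_of_set {0..1::real}) {0..1}" by (simp add: compactin_subtopology)
  have "compactin X (\<Union>\<delta>\<in>D. \<delta> ` {0..1})"
  proof (rule compactin_Union)
    show "finite ((\<lambda>\<delta>. \<delta> ` {0..1}) ` D)" using finD by simp
    fix S assume "S \<in> (\<lambda>\<delta>. \<delta> ` {0..1}) ` D"
    then obtain \<delta> where "\<delta> \<in> D" "S = \<delta> ` {0..1}" by blast
    then show "compactin X S" using image_compactin[OF cpt] contD by blast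
  qed
  then have "closedin X (\<Union>\<delta>\<in>D. \<delta> ` {0..1})" using H compactin_imp_closedin by blast
  from closedin_continuous_map_preimage[OF cg this]
  have "closedin (top_of_set {0..1}) {t\<in>{0..1}. \<gamma> t \<in> (\<Union>\<delta>\<in>D. \<delta> ` {0..1})}"
    by (simp only: topspace_euclidean_subtopology)
  then show ?thesis by (rule closedin_closed_trans) (rule closed_atLeastAtMost)
qed

lemma dichotomy:
  fixes \<gamma> :: "real \<Rightarrow> 'a" and X :: "'a topology" and C D :: "(real \<Rightarrow> 'a) set"
  assumes H: "Hausdorff_space X"
  and finC: "finite C" and contC: "\<forall>\<eta>\<in>C. continuous_map (top_of_set {0..1}) X \<eta>"
  and injC: "\<forall>\<eta>\<in>C. \<forall>\<eta>'\<in>C. \<forall>s\<in>{0..1}. \<forall>t\<in>{0..1}. \<eta> s = \<eta>' t \<and> (\<eta>,s)\<noteq>(\<eta>',t) \<longrightarrow> s\<in>{0,1} \<and> t\<in>{0,1}"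
  and \<gamma>C: "\<gamma>\<in>C"
  and finD: "finite D" and contD: "\<forall>\<delta>\<in>D. continuous_map (top_of_set {0..1}) X \<delta>"
  and injD: "\<forall>\<delta>\<in>D. \<forall>s\<in>{0..1}. \<forall>t\<in>{0..1}. \<delta> s = \<delta> t \<and> s\<noteq>t \<longrightarrow> s\<in>{0,1}"
  and subD: "(\<Union>\<delta>\<in>D. \<delta> ` {0..1}) \<subseteq> (\<Union>\<eta>\<in>C. \<eta> ` {0..1})"
  and ab: "0 \<le> a" "a < b" "b \<le> 1"
  and nobr: "\<forall>t\<in>{a<..<b}. \<forall>\<delta>\<in>D. \<gamma> t \<noteq> \<delta> 0 \<and> \<gamma> t \<noteq> \<delta> 1"
  shows "{a<..<b} \<subseteq> {t\<in>{0..1}. \<gamma> t \<in> (\<Union>\<delta>\<in>D. \<delta> ` {0..1})} \<or>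
         {a<..<b} \<inter> {t\<in>{0..1}. \<gamma> t \<in> (\<Union>\<delta>\<in>D. \<delta> ` {0..1})} = {}"
proof -
  define S where "S = {t\<in>{0..1}. \<gamma> t \<in> (\<Union>\<delta>\<in>D. \<delta> ` {0..1})}"
  have cg: "continuous_map (top_of_set {0..1}) X \<gamma>" using contC \<gamma>C by blast
  have clS: "closed S" unfolding S_def using closed_pre[OF H finD contD cg] .
  have int: "t \<in> interior S" if t: "t \<in> {a<..<b}" "t \<in> S" for t
  proof -
    obtain \<delta> u where \<delta>: "\<delta> \<in> D" "u \<in> {0..1}" "\<gamma> t = \<delta> u" using t(2) unfolding S_def by blast
    have "\<gamma> t \<noteq> \<delta> 0 \<and> \<gamma> t \<noteq> \<delta> 1" using nobr t(1) \<delta>(1) by blast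
    then have "u \<noteq> 0" "u \<noteq> 1" using \<delta>(3) by auto
    then have u: "0 < u" "u < 1" using \<delta>(2) by auto
    have t01: "0 < t" "t < 1" using t(1) ab by auto
    have s1: "\<delta> ` {0..1} \<subseteq> (\<Union>\<eta>\<in>C. \<eta> ` {0..1})" using subD \<delta>(1) by blast
    have s2: "\<forall>s\<in>{0..1}. \<forall>t\<in>{0..1}. \<delta> s = \<delta> t \<and> s\<noteq>t \<longrightarrow> s\<in>{0,1}" using injD \<delta>(1) by blast
    have s3: "continuous_map (top_of_set {0..1}) X \<delta>" using contD \<delta>(1) by blast
    obtain r where r: "r > 0" "ball t r \<subseteq> {t'\<in>{0..1}. \<gamma> t' \<in> \<delta> ` {0..1}}"
      using local_cover[OF H finC contC injC \<gamma>C s3 s2 s1 t01 u \<delta>(3)] by blast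
    have "ball t r \<subseteq> S"
    proof
      fix x assume "x \<in> ball t r"
      then have "x \<in> {0..1}" "\<gamma> x \<in> \<delta> ` {0..1}" using r(2) by auto
      then show "x \<in> S" unfolding S_def using \<delta>(1) by blast
    qed
    then show ?thesis using r(1) mem_interior by blast
  qed
  have "interior S \<inter> {a<..<b} = {} \<or> (- S) \<inter> {a<..<b} = {}"
  proof (rule connectedD)
    show "connected {a<..<b}" by simp
    show "open (interior S)" by simp
    show "open (- S)" using clS by (simp add: open_Compl)
    show "interior S \<inter> - S \<inter> {a<..<b} = {}" using interior_subset by blast
    show "{a<..<b} \<subseteq> interior S \<union> - S" using int by blast
  qed
  then have "{a<..<b} \<subseteq> S \<or> {a<..<b} \<inter> S = {}"
  proof
    assume "interior S \<inter> {a<..<b} = {}"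
    then have "{a<..<b} \<inter> S = {}" using int by blast
    then show ?thesis by (rule disjI2)
  next
    assume "- S \<inter> {a<..<b} = {}"
    then have "{a<..<b} \<subseteq> S" by blast
    then show ?thesis by (rule disjI1)
  qed
  then show ?thesis by (simp only: S_def)
qed




lemma ends:
  fixes a b s :: real
  assumes "0 \<le> a" "a < b" "b \<le> 1" "s \<in> {0..1}"
  shows "a + (b-a) * s = 0 \<Longrightarrow> s = 0"
    and "a + (b-a) * s = 1 \<Longrightarrow> s = 1"
    and "a + (b-a) * s = b \<Longrightarrow> s = 1"
    and "a + (b-a) * s = a \<Longrightarrow> s = 0"
    and "a + (b-a) * s \<in> {0..1}"
proof -
  have p: "0 \<le> (b-a) * s" "(b-a) * s \<le> (b-a)" using assms by (auto simp: mult_left_le)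
  have z: "(b-a) * s = 0 \<Longrightarrow> s = 0" using assms by simp
  have o: "(b-a) * s = (b-a) \<Longrightarrow> s = 1" using assms by simp
  show "a + (b-a) * s = 0 \<Longrightarrow> s = 0" using p z assms by linarith
  show "a + (b-a) * s = 1 \<Longrightarrow> s = 1" using p o assms by linarith
  show "a + (b-a) * s = b \<Longrightarrow> s = 1" using p o assms by linarith
  show "a + (b-a) * s = a \<Longrightarrow> s = 0" using p z assms by linarith
  show "a + (b-a) * s \<in> {0..1}" using p assms by (simp only: atLeastAtMost_iff) linarith
qed

lemma lin_inj:
  fixes a b s t :: real
  assumes "a < b" "a + (b-a) * s = a + (b-a) * t" shows "s = t"
  using assms by simp

lemma opp_contra:
  fixes v :: "'b::real_vector"
  assumes "v \<noteq> 0" "p > 0" "q \<ge> 0" "- (p *\<^sub>R v) = q *\<^sub>R v"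
  shows False
proof -
  have "(p + q) *\<^sub>R v = p *\<^sub>R v + q *\<^sub>R v" by (simp add: scaleR_left_distrib)
  also have "\<dots> = 0" using assms(4) by (metis add.commute ab_left_minus)
  finally have "(p + q) *\<^sub>R v = 0" .
  then show False using assms by simp
qed

lemma scl:
  fixes w1 w2 :: "'b::real_vector"
  assumes "p > 0" "p *\<^sub>R w1 = c *\<^sub>R (q *\<^sub>R w2)"
  shows "w1 = (c * q / p) *\<^sub>R w2"
proof -
  have "w1 = inverse p *\<^sub>R (p *\<^sub>R w1)" using assms(1) by simp
  also have "\<dots> = (inverse p * c * q) *\<^sub>R w2" using assms(2) by simp
  finally show ?thesis by (simp add: field_simps)
qed

lemma lin_indep2_scale:
  assumes "k \<noteq> 0" "lin_indep2 v w" shows "lin_indep2 (k *\<^sub>R v) w"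
proof -
  have "(k * v$1) * w$2 - (k * v$2) * w$1 = k * (v$1 * w$2 - v$2 * w$1)" by (simp add: algebra_simps)
  then show ?thesis using assms unfolding lin_indep2_def by simp
qed

lemma img_closure:
  fixes \<gamma> :: "real \<Rightarrow> 'a"
  assumes cg: "continuous_map (top_of_set {0..1}) X \<gamma>" and ab: "0 \<le> a" "a < b" "b \<le> 1"
  shows "\<gamma> ` {a..b} \<subseteq> X closure_of (\<gamma> ` {a<..<b})"
proof -
  have e1: "{0..1} \<inter> {a<..<b} = {a<..<b}" using ab by auto
  have e2: "{0..1} \<inter> {a..b} = {a..b}" using ab by auto
  have "(top_of_set {0..1}) closure_of {a<..<b} = {a..b}"
    unfolding closure_of_subtopology e1 euclidean_closure_of closure_greaterThanLessThan[OF ab(2)] e2 ..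
  then show ?thesis using continuous_map_image_closure_subset[OF cg, of "{a<..<b}"] by simp
qed



lemma cfD:
  assumes "cut_family X A M B C"
  shows "finite C" "\<forall>\<gamma>\<in>C. regular_C1_curve X A \<gamma> \<and> \<gamma> ` {0..1} \<subseteq> M"
    "\<forall>\<gamma>\<in>C. \<forall>\<delta>\<in>C. \<forall>s\<in>{0..1}. \<forall>t\<in>{0..1}.
        \<gamma> s = \<delta> t \<and> (\<gamma>, s) \<noteq> (\<delta>, t) \<longrightarrow>
          s \<in> {0, 1} \<and> t \<in> {0, 1} \<and>
          (\<forall>(U, \<phi>)\<in>A. \<gamma> s \<in> U \<longrightarrow>
             \<not> (\<exists>c>0. out_vel \<phi> \<gamma> s = c *\<^sub>R out_vel \<phi> \<delta> t))"
    "\<forall>\<gamma>\<in>C. \<forall>\<beta>\<in>B. \<forall>s\<in>{0..1}. \<forall>u\<in>{0..1}.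
        \<gamma> s = \<beta> u \<longrightarrow>
          s \<in> {0, 1} \<and>
          (\<forall>(U, \<phi>)\<in>A. \<gamma> s \<in> U \<longrightarrow> lin_indep2 (chart_vel \<phi> \<gamma> s) (chart_vel \<phi> \<beta> u))"
proof -
  note h = assms[unfolded cut_family_def]
  show "finite C" by (rule conjunct1[OF h])
  show "\<forall>\<gamma>\<in>C. regular_C1_curve X A \<gamma> \<and> \<gamma> ` {0..1} \<subseteq> M" by (rule conjunct1[OF conjunct2[OF h]])
  show "\<forall>\<gamma>\<in>C. \<forall>\<delta>\<in>C. \<forall>s\<in>{0..1}. \<forall>t\<in>{0..1}.
        \<gamma> s = \<delta> t \<and> (\<gamma>, s) \<noteq> (\<delta>, t) \<longrightarrow>
          s \<in> {0, 1} \<and> t \<in> {0, 1} \<and>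
          (\<forall>(U, \<phi>)\<in>A. \<gamma> s \<in> U \<longrightarrow>
             \<not> (\<exists>c>0. out_vel \<phi> \<gamma> s = c *\<^sub>R out_vel \<phi> \<delta> t))"
    by (rule conjunct1[OF conjunct2[OF conjunct2[OF h]]])
  show "\<forall>\<gamma>\<in>C. \<forall>\<beta>\<in>B. \<forall>s\<in>{0..1}. \<forall>u\<in>{0..1}.
        \<gamma> s = \<beta> u \<longrightarrow>
          s \<in> {0, 1} \<and>
          (\<forall>(U, \<phi>)\<in>A. \<gamma> s \<in> U \<longrightarrow> lin_indep2 (chart_vel \<phi> \<gamma> s) (chart_vel \<phi> \<beta> u))"
    by (rule conjunct2[OF conjunct2[OF conjunct2[OF h]]])
qed

lemma cf_basic:
  assumes "cut_family X A M B C"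
  shows "\<forall>\<eta>\<in>C. continuous_map (top_of_set {0..1}) X \<eta>"
    and "\<forall>\<eta>\<in>C. \<forall>\<eta>'\<in>C. \<forall>s\<in>{0..1}. \<forall>t\<in>{0..1}. \<eta> s = \<eta>' t \<and> (\<eta>,s)\<noteq>(\<eta>',t) \<longrightarrow> s\<in>{0,1} \<and> t\<in>{0,1}"
    and "\<forall>\<delta>\<in>C. \<forall>s\<in>{0..1}. \<forall>t\<in>{0..1}. \<delta> s = \<delta> t \<and> s\<noteq>t \<longrightarrow> s\<in>{0,1}"
proof -
  note c = cfD[OF assms]
  show "\<forall>\<eta>\<in>C. continuous_map (top_of_set {0..1}) X \<eta>"
  proof
    fix \<eta> assume "\<eta> \<in> C"
    then have "regular_C1_curve X A \<eta>" using c(2) by blast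
    then show "continuous_map (top_of_set {0..1}) X \<eta>" by (simp add: regular_C1_curve_def)
  qed
  show i: "\<forall>\<eta>\<in>C. \<forall>\<eta>'\<in>C. \<forall>s\<in>{0..1}. \<forall>t\<in>{0..1}. \<eta> s = \<eta>' t \<and> (\<eta>,s)\<noteq>(\<eta>',t) \<longrightarrow> s\<in>{0,1} \<and> t\<in>{0,1}"
  proof (intro ballI impI)
    fix \<eta> \<eta>' s t assume h: "\<eta> \<in> C" "\<eta>' \<in> C" "s \<in> {0..1}" "t \<in> {0..1}" "\<eta> s = \<eta>' t \<and> (\<eta>,s)\<noteq>(\<eta>',t)"
    show "s\<in>{0,1} \<and> t\<in>{0,1}" using c(3)[rule_format, OF h] by blast
  qed
  show "\<forall>\<delta>\<in>C. \<forall>s\<in>{0..1}. \<forall>t\<in>{0..1}. \<delta> s = \<delta> t \<and> s\<noteq>t \<longrightarrow> s\<in>{0,1}"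
  proof (intro ballI impI)
    fix \<delta> s t assume h: "\<delta> \<in> C" "s \<in> {0..1}" "t \<in> {0..1}" "\<delta> s = \<delta> t \<and> s\<noteq>t"
    then have "\<delta> s = \<delta> t \<and> (\<delta>,s)\<noteq>(\<delta>,t)" by simp
    then show "s\<in>{0,1}" using i[rule_format, OF h(1) h(1) h(2) h(3)] by blast
  qed
qed



lemma pair_piece:
  fixes \<gamma> \<delta> f g :: "real \<Rightarrow> 'a" and C :: "(real \<Rightarrow> 'a) set"
  assumes pairC: "\<forall>\<gamma>\<in>C. \<forall>\<delta>\<in>C. \<forall>s\<in>{0..1}. \<forall>t\<in>{0..1}.
        \<gamma> s = \<delta> t \<and> (\<gamma>, s) \<noteq> (\<delta>, t) \<longrightarrow>
          s \<in> {0, 1} \<and> t \<in> {0, 1} \<and>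
          (\<forall>(U, \<phi>)\<in>A. \<gamma> s \<in> U \<longrightarrow>
             \<not> (\<exists>c>0. out_vel \<phi> \<gamma> s = c *\<^sub>R out_vel \<phi> \<delta> t))"
    and \<gamma>C: "\<gamma> \<in> C" and \<delta>C: "\<delta> \<in> C"
    and reg\<gamma>: "regular_C1_curve X A \<gamma>" and reg\<delta>: "regular_C1_curve X A \<delta>"
    and ab: "0 \<le> a" "a < b" "b \<le> 1" and ab': "0 \<le> a'" "a' < b'" "b' \<le> 1"
    and ovl: "\<And>x. \<gamma> = \<delta> \<Longrightarrow> x \<in> {a..b} \<Longrightarrow> x \<in> {a'..b'} \<Longrightarrow> (a, b) \<noteq> (a', b') \<Longrightarrow>
               (x = b \<and> x = a') \<or> (x = a \<and> x = b')"
    and f_def: "f = (\<lambda>s. \<gamma> (a + (b-a) * s))" and g_def: "g = (\<lambda>s. \<delta> (a' + (b'-a') * s))"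
    and st: "s \<in> {0..1}" "t \<in> {0..1}"
    and eq: "f s = g t" and neq: "(f, s) \<noteq> (g, t)"
  shows "s \<in> {0, 1} \<and> t \<in> {0, 1} \<and>
          (\<forall>(U, \<phi>)\<in>A. f s \<in> U \<longrightarrow> \<not> (\<exists>c>0. out_vel \<phi> f s = c *\<^sub>R out_vel \<phi> g t))"
proof -
  define x where "x = a + (b-a) * s"
  define y where "y = a' + (b'-a') * t"
  have x01: "x \<in> {0..1}" unfolding x_def using ends(5)[OF ab st(1)] .
  have y01: "y \<in> {0..1}" unfolding y_def using ends(5)[OF ab' st(2)] .
  have fs: "f s = \<gamma> x" unfolding f_def x_def by simp
  have gt: "g t = \<delta> y" unfolding g_def y_def by simp
  have velf: "chart_vel \<phi> f s = (b-a) *\<^sub>R chart_vel \<phi> \<gamma> x" if "(U, \<phi>) \<in> A" "\<gamma> x \<in> U" for U \<phi>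
    unfolding f_def x_def using seg_regular(2)[OF reg\<gamma> ab that(1) st(1)] that(2) unfolding x_def by simp
  have velg: "chart_vel \<phi> g t = (b'-a') *\<^sub>R chart_vel \<phi> \<delta> y" if "(U, \<phi>) \<in> A" "\<delta> y \<in> U" for U \<phi>
    unfolding g_def y_def using seg_regular(2)[OF reg\<delta> ab' that(1) st(2)] that(2) unfolding y_def by simp
  show ?thesis
  proof (cases "(\<gamma>, x) = (\<delta>, y)")
    case False
    have "\<gamma> x = \<delta> y \<and> (\<gamma>, x) \<noteq> (\<delta>, y)" using False eq fs gt by simp
    note P = pairC[rule_format, OF \<gamma>C \<delta>C x01 y01 this]
    have sx: "s = x"
    proof -
      have "x = 0 \<or> x = 1" using P by simp
      then show ?thesis
      proof
        assume "x = 0" then show ?thesis using ends(1)[OF ab st(1)] x_def by simp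
      next
        assume "x = 1" then show ?thesis using ends(2)[OF ab st(1)] x_def by simp
      qed
    qed
    have ty: "t = y"
    proof -
      have "y = 0 \<or> y = 1" using P by simp
      then show ?thesis
      proof
        assume "y = 0" then show ?thesis using ends(1)[OF ab' st(2)] y_def by simp
      next
        assume "y = 1" then show ?thesis using ends(2)[OF ab' st(2)] y_def by simp
      qed
    qed
    have W: "\<forall>(U, \<phi>)\<in>A. \<gamma> x \<in> U \<longrightarrow> \<not> (\<exists>c>0. out_vel \<phi> \<gamma> x = c *\<^sub>R out_vel \<phi> \<delta> y)"
      using P by blast
    have "\<not> (\<exists>c>0. out_vel \<phi> f s = c *\<^sub>R out_vel \<phi> g t)" if U: "(U, \<phi>) \<in> A" "f s \<in> U" for U \<phi>
    proof
      assume "\<exists>c>0. out_vel \<phi> f s = c *\<^sub>R out_vel \<phi> g t"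
      then obtain c where c: "c > 0" "out_vel \<phi> f s = c *\<^sub>R out_vel \<phi> g t" by blast
      have gx: "\<gamma> x \<in> U" using U fs by simp
      have dy: "\<delta> y \<in> U" using U eq gt by simp
      have ovf: "out_vel \<phi> f s = (b-a) *\<^sub>R out_vel \<phi> \<gamma> x"
        unfolding out_vel_def velf[OF U(1) gx] unfolding sx by simp
      have ovg: "out_vel \<phi> g t = (b'-a') *\<^sub>R out_vel \<phi> \<delta> y"
        unfolding out_vel_def velg[OF U(1) dy] unfolding ty by simp
      have "(b-a) *\<^sub>R out_vel \<phi> \<gamma> x = c *\<^sub>R ((b'-a') *\<^sub>R out_vel \<phi> \<delta> y)"
        using c(2) ovf ovg by simp
      then have "out_vel \<phi> \<gamma> x = (c * (b'-a') / (b-a)) *\<^sub>R out_vel \<phi> \<delta> y"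
        by (rule scl[rotated]) (use ab in simp)
      moreover have "c * (b'-a') / (b-a) > 0" using c ab ab' by simp
      ultimately show False using W U(1) gx by blast
    qed
    then show ?thesis using P sx ty by blast
  next
    case True
    then have gd: "\<gamma> = \<delta>" and xy: "x = y" by auto
    show ?thesis
    proof (cases "(a, b) = (a', b')")
      case True
      then have "s = t" using xy lin_inj[of a b s t] ab unfolding x_def y_def by simp
      moreover have "f = g" using True gd f_def g_def by simp
      ultimately show ?thesis using neq by simp
    next
      case False
      have xa: "x \<in> {a..b}" using x01 ends(5) unfolding x_def
        using lin_image[OF ab(2)] st(1) by blast
      have xa': "x \<in> {a'..b'}" using xy unfolding y_def
        using lin_image[OF ab'(2)] st(2) by blast
      from ovl[OF gd xa xa' False] show ?thesis
      proof
        assume h: "x = b \<and> x = a'"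
        have s1: "s = 1" using ends(3)[OF ab st(1)] h x_def by simp
        have t0: "t = 0" using ends(4)[OF ab' st(2)] h xy y_def by simp
        have "\<not> (\<exists>c>0. out_vel \<phi> f s = c *\<^sub>R out_vel \<phi> g t)" if U: "(U, \<phi>) \<in> A" "f s \<in> U" for U \<phi>
        proof
          assume "\<exists>c>0. out_vel \<phi> f s = c *\<^sub>R out_vel \<phi> g t"
          then obtain c where c: "c > 0" "out_vel \<phi> f s = c *\<^sub>R out_vel \<phi> g t" by blast
          have gx: "\<gamma> x \<in> U" using U fs by simp
          have nz: "chart_vel \<phi> \<gamma> x \<noteq> 0" using regD(2)[OF reg\<gamma> U(1) x01 gx] .
          have "out_vel \<phi> f s = - ((b-a) *\<^sub>R chart_vel \<phi> \<gamma> x)"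
            unfolding out_vel_def velf[OF U(1) gx] unfolding s1 by simp
          moreover have "out_vel \<phi> g t = (b'-a') *\<^sub>R chart_vel \<phi> \<gamma> x"
            unfolding out_vel_def velg[OF U(1) gx[unfolded gd xy]] unfolding t0 gd xy by simp
          ultimately have "- ((b-a) *\<^sub>R chart_vel \<phi> \<gamma> x) = (c * (b'-a')) *\<^sub>R chart_vel \<phi> \<gamma> x"
            using c(2) by simp
          moreover have "c * (b'-a') \<ge> 0" using c ab' by simp
          ultimately show False using opp_contra[OF nz] ab by fastforce
        qed
        then show ?thesis using s1 t0 by blast
      next
        assume h: "x = a \<and> x = b'"
        have s0: "s = 0" using ends(4)[OF ab st(1)] h x_def by simp
        have t1: "t = 1" using ends(3)[OF ab' st(2)] h xy y_def by simp
        have "\<not> (\<exists>c>0. out_vel \<phi> f s = c *\<^sub>R out_vel \<phi> g t)" if U: "(U, \<phi>) \<in> A" "f s \<in> U" for U \<phi>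
        proof
          assume "\<exists>c>0. out_vel \<phi> f s = c *\<^sub>R out_vel \<phi> g t"
          then obtain c where c: "c > 0" "out_vel \<phi> f s = c *\<^sub>R out_vel \<phi> g t" by blast
          have gx: "\<gamma> x \<in> U" using U fs by simp
          have nz: "chart_vel \<phi> \<gamma> x \<noteq> 0" using regD(2)[OF reg\<gamma> U(1) x01 gx] .
          have "out_vel \<phi> f s = (b-a) *\<^sub>R chart_vel \<phi> \<gamma> x"
            unfolding out_vel_def velf[OF U(1) gx] unfolding s0 by simp
          moreover have "out_vel \<phi> g t = - ((b'-a') *\<^sub>R chart_vel \<phi> \<gamma> x)"
            unfolding out_vel_def velg[OF U(1) gx[unfolded gd xy]] unfolding t1 gd xy by simp
          ultimately have "- ((c * (b'-a')) *\<^sub>R chart_vel \<phi> \<gamma> x) = (b-a) *\<^sub>R chart_vel \<phi> \<gamma> x"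
            using c(2) by simp
          moreover have "c * (b'-a') > 0" using c ab' by simp
          ultimately show False using opp_contra[OF nz] ab by fastforce
        qed
        then show ?thesis using s0 t1 by blast
      qed
    qed
  qed
qed



theorem lemma3p4:
  fixes X :: "'a topology" and A :: "'a chart set" and M :: "'a set"
    and B :: "(real \<Rightarrow> 'a) set" and \<Gamma>1 \<Gamma>2 :: "'a set"
  assumes "surface_pw_C1_boundary X A M B"
    and "compatible_cuts X A M B \<Gamma>1 \<Gamma>2"
  shows "\<exists>C. cut_family X A M B C \<and> (\<Union>\<gamma>\<in>C. \<gamma> ` {0..1}) = \<Gamma>1 \<union> \<Gamma>2 \<and>
           (\<forall>\<gamma>\<in>C. \<gamma> ` {0..1} \<subseteq> X closure_of (\<Gamma>1 - \<Gamma>2) \<or>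
                    \<gamma> ` {0..1} \<subseteq> X closure_of (\<Gamma>2 - \<Gamma>1) \<or>
                    \<gamma> ` {0..1} \<subseteq> \<Gamma>1 \<inter> \<Gamma>2)"
proof -
  have H: "Hausdorff_space X"
    using assms(1) unfolding surface_pw_C1_boundary_def oriented_C1_surface_def by (elim conjE)
  have pw1: "pw_C1_cut X A M B \<Gamma>1" using assms(2) unfolding compatible_cuts_def by (rule conjunct1)
  have pw2: "pw_C1_cut X A M B \<Gamma>2" using assms(2) unfolding compatible_cuts_def by (rule conjunct1[OF conjunct2])
  have pwU: "pw_C1_cut X A M B (\<Gamma>1 \<union> \<Gamma>2)" using assms(2) unfolding compatible_cuts_def by (rule conjunct2[OF conjunct2])
  obtain C1 where cf1: "cut_family X A M B C1" and G1: "\<Gamma>1 = (\<Union>\<gamma>\<in>C1. \<gamma> ` {0..1})"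
    using pw1 unfolding pw_C1_cut_def by (elim exE conjE)
  obtain C2 where cf2: "cut_family X A M B C2" and G2: "\<Gamma>2 = (\<Union>\<gamma>\<in>C2. \<gamma> ` {0..1})"
    using pw2 unfolding pw_C1_cut_def by (elim exE conjE)
  obtain C where cfC: "cut_family X A M B C" and GU: "\<Gamma>1 \<union> \<Gamma>2 = (\<Union>\<gamma>\<in>C. \<gamma> ` {0..1})"
    using pwU unfolding pw_C1_cut_def by (elim exE conjE)
  note cC = cfD[OF cfC] and bC = cf_basic[OF cfC]
  note c1 = cfD[OF cf1] and b1 = cf_basic[OF cf1]
  note c2 = cfD[OF cf2] and b2 = cf_basic[OF cf2]
  have finC: "finite C" by (rule cC(1))
  have regC: "\<And>\<gamma>. \<gamma> \<in> C \<Longrightarrow> regular_C1_curve X A \<gamma>" using cC(2) by blast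
  have imC: "\<And>\<gamma>. \<gamma> \<in> C \<Longrightarrow> \<gamma> ` {0..1} \<subseteq> M" using cC(2) by blast
  have sub1: "(\<Union>\<delta>\<in>C1. \<delta> ` {0..1}) \<subseteq> (\<Union>\<eta>\<in>C. \<eta> ` {0..1})" using G1 GU by blast
  have sub2: "(\<Union>\<delta>\<in>C2. \<delta> ` {0..1}) \<subseteq> (\<Union>\<eta>\<in>C. \<eta> ` {0..1})" using G2 GU by blast
  define E where "E = (\<Union>\<delta>\<in>C1 \<union> C2. {\<delta> 0, \<delta> 1})"
  have finE: "finite E" unfolding E_def using c1(1) c2(1) by simp
  define F where "F = (\<lambda>\<gamma>::real \<Rightarrow> 'a. {0,1} \<union> {t\<in>{0<..<1}. \<gamma> t \<in> E})"
  have Fsub: "\<And>\<gamma>. F \<gamma> \<subseteq> {0..1}" unfolding F_def by auto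
  have F01: "\<And>\<gamma>. 0 \<in> F \<gamma>" "\<And>\<gamma>. 1 \<in> F \<gamma>" unfolding F_def by auto
  have finF: "finite (F \<gamma>)" if "\<gamma> \<in> C" for \<gamma>
  proof -
    have "inj_on \<gamma> {0<..<1}"
    proof
      fix x y assume xy: "x \<in> {0<..<1}" "y \<in> {0<..<1}" "\<gamma> x = \<gamma> y"
      show "x = y"
      proof (rule ccontr)
        assume "x \<noteq> y"
        then have "\<gamma> x = \<gamma> y \<and> (\<gamma>, x) \<noteq> (\<gamma>, y)" using xy by simp
        moreover have "x \<in> {0..1}" "y \<in> {0..1}" using xy by auto
        ultimately have "x \<in> {0,1}" using bC(2)[rule_format, OF that that] by blast
        then show False using xy by auto
      qed
    qed
    then have "finite (\<gamma> -` E \<inter> {0<..<1})" using finite_vimage_IntI finE by blast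
    moreover have "{t\<in>{0<..<1}. \<gamma> t \<in> E} = \<gamma> -` E \<inter> {0<..<1}" by blast
    ultimately show ?thesis unfolding F_def by simp
  qed
  define P where "P = {(\<gamma>, a, b). \<gamma> \<in> C \<and> a \<in> F \<gamma> \<and> b \<in> F \<gamma> \<and> a < b \<and> {a<..<b} \<inter> F \<gamma> = {}}"
  define sg where "sg = (\<lambda>(\<gamma>::real \<Rightarrow> 'a, a::real, b::real). (\<lambda>s. \<gamma> (a + (b-a) * s)))"
  define C' where "C' = sg ` P"
  have PD: "\<gamma> \<in> C" "a \<in> F \<gamma>" "b \<in> F \<gamma>" "a < b" "{a<..<b} \<inter> F \<gamma> = {}" "0 \<le> a" "b \<le> 1"
    if "(\<gamma>, a, b) \<in> P" for \<gamma> a b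
  proof -
    have h: "\<gamma> \<in> C" "a \<in> F \<gamma>" "b \<in> F \<gamma>" "a < b" "{a<..<b} \<inter> F \<gamma> = {}"
      using that unfolding P_def by auto
    moreover have "a \<in> {0..1}" "b \<in> {0..1}" using h(2,3) Fsub[of \<gamma>] by blast+
    ultimately show "\<gamma> \<in> C" "a \<in> F \<gamma>" "b \<in> F \<gamma>" "a < b" "{a<..<b} \<inter> F \<gamma> = {}" "0 \<le> a" "b \<le> 1"
      by auto
  qed
  have sgD: "sg (\<gamma>, a, b) = (\<lambda>s. \<gamma> (a + (b-a) * s))" for \<gamma> a b unfolding sg_def by simp
  have imgP: "sg (\<gamma>, a, b) ` {0..1} = \<gamma> ` {a..b}" if "(\<gamma>, a, b) \<in> P" for \<gamma> a b
  proof -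
    have "sg (\<gamma>, a, b) ` {0..1} = \<gamma> ` ((\<lambda>s. a + (b-a) * s) ` {0..1})" unfolding sgD by (simp add: image_image)
    then show ?thesis using lin_image[OF PD(4)[OF that]] by simp
  qed
  have finP: "finite P"
  proof (rule finite_subset)
    show "P \<subseteq> (SIGMA \<gamma>:C. F \<gamma> \<times> F \<gamma>)" unfolding P_def by auto
    show "finite (SIGMA \<gamma>:C. F \<gamma> \<times> F \<gamma>)" using finC finF by (intro finite_SigmaI finite_cartesian_product) auto
  qed
  have unionC': "(\<Union>f\<in>C'. f ` {0..1}) = \<Gamma>1 \<union> \<Gamma>2"
  proof
    show "(\<Union>f\<in>C'. f ` {0..1}) \<subseteq> \<Gamma>1 \<union> \<Gamma>2"
    proof
      fix p assume "p \<in> (\<Union>f\<in>C'. f ` {0..1})"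
      then obtain \<gamma> a b where P: "(\<gamma>, a, b) \<in> P" and p: "p \<in> sg (\<gamma>, a, b) ` {0..1}"
        unfolding C'_def by auto
      then have "p \<in> \<gamma> ` {a..b}" using imgP by simp
      moreover have "{a..b} \<subseteq> {0..1}" using PD(6,7)[OF P] by auto
      ultimately have "p \<in> \<gamma> ` {0..1}" by blast
      then show "p \<in> \<Gamma>1 \<union> \<Gamma>2" using GU PD(1)[OF P] by blast
    qed
    show "\<Gamma>1 \<union> \<Gamma>2 \<subseteq> (\<Union>f\<in>C'. f ` {0..1})"
    proof
      fix p assume "p \<in> \<Gamma>1 \<union> \<Gamma>2"
      then obtain \<gamma> x where g: "\<gamma> \<in> C" "x \<in> {0..1}" "p = \<gamma> x" using GU by blast
      obtain a b where ab: "a \<in> F \<gamma>" "b \<in> F \<gamma>" "a < b" "{a<..<b} \<inter> F \<gamma> = {}" "x \<in> {a..b}"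
        using partition_cover[OF finF[OF g(1)] F01 Fsub g(2)] by blast
      then have P: "(\<gamma>, a, b) \<in> P" unfolding P_def using g by simp
      have "p \<in> sg (\<gamma>, a, b) ` {0..1}" using imgP[OF P] ab(5) g(3) by simp
      then show "p \<in> (\<Union>f\<in>C'. f ` {0..1})" unfolding C'_def using P by blast
    qed
  qed
  have C'D: "\<exists>\<gamma> a b. (\<gamma>, a, b) \<in> P \<and> f = sg (\<gamma>, a, b)" if "f \<in> C'" for f
    using that unfolding C'_def by auto
  have cut': "cut_family X A M B C'"
    unfolding cut_family_def
  proof (intro conjI)
    show "finite C'" unfolding C'_def using finP by simp
    show "\<forall>f\<in>C'. regular_C1_curve X A f \<and> f ` {0..1} \<subseteq> M"
    proof
      fix f assume "f \<in> C'"
      then obtain \<gamma> a b where P: "(\<gamma>, a, b) \<in> P" and f: "f = sg (\<gamma>, a, b)" using C'D by blast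
      have "regular_C1_curve X A f" unfolding f sgD
        using seg_regular(1)[OF regC[OF PD(1)[OF P]] PD(6)[OF P] PD(4)[OF P] PD(7)[OF P]] .
      moreover have "f ` {0..1} \<subseteq> M"
      proof -
        have "{a..b} \<subseteq> {0..1}" using PD(6,7)[OF P] by auto
        then have "\<gamma> ` {a..b} \<subseteq> \<gamma> ` {0..1}" by (rule image_mono)
        then show ?thesis using imgP[OF P] imC[OF PD(1)[OF P]] f by simp
      qed
      ultimately show "regular_C1_curve X A f \<and> f ` {0..1} \<subseteq> M" by blast
    qed
    show "\<forall>f\<in>C'. \<forall>g\<in>C'. \<forall>s\<in>{0..1}. \<forall>t\<in>{0..1}.
        f s = g t \<and> (f, s) \<noteq> (g, t) \<longrightarrow>
          s \<in> {0, 1} \<and> t \<in> {0, 1} \<and>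
          (\<forall>(U, \<phi>)\<in>A. f s \<in> U \<longrightarrow>
             \<not> (\<exists>c>0. out_vel \<phi> f s = c *\<^sub>R out_vel \<phi> g t))"
    proof (intro ballI impI)
      fix f g s t assume fg: "f \<in> C'" "g \<in> C'" and st: "s \<in> {0..1}" "t \<in> {0..1}"
        and h: "f s = g t \<and> (f, s) \<noteq> (g, t)"
      obtain \<gamma> a b where P: "(\<gamma>, a, b) \<in> P" and f: "f = sg (\<gamma>, a, b)" using C'D fg(1) by blast
      obtain \<delta> a' b' where P': "(\<delta>, a', b') \<in> P" and g: "g = sg (\<delta>, a', b')" using C'D fg(2) by blast
      have ovl: "(x = b \<and> x = a') \<or> (x = a \<and> x = b')"
        if "\<gamma> = \<delta>" "x \<in> {a..b}" "x \<in> {a'..b'}" "(a, b) \<noteq> (a', b')" for x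
      proof -
        have "a' \<in> F \<gamma>" "b' \<in> F \<gamma>" "{a'<..<b'} \<inter> F \<gamma> = {}" using PD[OF P'] that(1) by auto
        then show ?thesis using consec_overlap[OF PD(2,3,4,5)[OF P] _ _ PD(4)[OF P'] _ that(2,3,4)] by blast
      qed
      show "s \<in> {0, 1} \<and> t \<in> {0, 1} \<and>
          (\<forall>(U, \<phi>)\<in>A. f s \<in> U \<longrightarrow> \<not> (\<exists>c>0. out_vel \<phi> f s = c *\<^sub>R out_vel \<phi> g t))"
        using pair_piece[OF cC(3) PD(1)[OF P] PD(1)[OF P'] regC[OF PD(1)[OF P]] regC[OF PD(1)[OF P']]
            PD(6)[OF P] PD(4)[OF P] PD(7)[OF P] PD(6)[OF P'] PD(4)[OF P'] PD(7)[OF P'] ovl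
            f[unfolded sgD] g[unfolded sgD] st conjunct1[OF h] conjunct2[OF h]] .
    qed
    show "\<forall>f\<in>C'. \<forall>\<beta>\<in>B. \<forall>s\<in>{0..1}. \<forall>u\<in>{0..1}.
        f s = \<beta> u \<longrightarrow>
          s \<in> {0, 1} \<and>
          (\<forall>(U, \<phi>)\<in>A. f s \<in> U \<longrightarrow> lin_indep2 (chart_vel \<phi> f s) (chart_vel \<phi> \<beta> u))"
    proof (intro ballI impI)
      fix f \<beta> s u assume f: "f \<in> C'" and \<beta>: "\<beta> \<in> B" and s: "s \<in> {0..1}" and u: "u \<in> {0..1}"
        and h: "f s = \<beta> u"
      obtain \<gamma> a b where P: "(\<gamma>, a, b) \<in> P" and fd: "f = sg (\<gamma>, a, b)" using C'D f by blast
      define x where "x = a + (b-a) * s"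
      have ab: "0 \<le> a" "a < b" "b \<le> 1" using PD[OF P] by auto
      have x01: "x \<in> {0..1}" unfolding x_def using ends(5)[OF ab s] .
      have fs: "f s = \<gamma> x" unfolding fd sgD x_def by simp
      note Q = cC(4)[rule_format, OF PD(1)[OF P] \<beta> x01 u, OF h[unfolded fs]]
      have sx: "s = x"
      proof -
        have "x = 0 \<or> x = 1" using Q by simp
        then show ?thesis
        proof
          assume "x = 0" then show ?thesis using ends(1)[OF ab s] x_def by simp
        next
          assume "x = 1" then show ?thesis using ends(2)[OF ab s] x_def by simp
        qed
      qed
      have "lin_indep2 (chart_vel \<phi> f s) (chart_vel \<phi> \<beta> u)" if U: "(U, \<phi>) \<in> A" "f s \<in> U" for U \<phi>
      proof -
        have gx: "\<gamma> x \<in> U" using U fs by simp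
        have "chart_vel \<phi> f s = (b-a) *\<^sub>R chart_vel \<phi> \<gamma> x"
          unfolding fd sgD x_def using seg_regular(2)[OF regC[OF PD(1)[OF P]] ab U(1) s] gx unfolding x_def by simp
        moreover have "lin_indep2 (chart_vel \<phi> \<gamma> x) (chart_vel \<phi> \<beta> u)" using Q U(1) gx by blast
        ultimately show ?thesis using lin_indep2_scale[of "b-a"] ab by simp
      qed
      then show "s \<in> {0, 1} \<and> (\<forall>(U, \<phi>)\<in>A. f s \<in> U \<longrightarrow> lin_indep2 (chart_vel \<phi> f s) (chart_vel \<phi> \<beta> u))"
        using Q sx by blast
    qed
  qed
  have clos: "f ` {0..1} \<subseteq> X closure_of (\<Gamma>1 - \<Gamma>2) \<or> f ` {0..1} \<subseteq> X closure_of (\<Gamma>2 - \<Gamma>1) \<or>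
              f ` {0..1} \<subseteq> \<Gamma>1 \<inter> \<Gamma>2" if f: "f \<in> C'" for f
  proof -
    obtain \<gamma> a b where P: "(\<gamma>, a, b) \<in> P" and fd: "f = sg (\<gamma>, a, b)" using C'D f by blast
    have ab: "0 \<le> a" "a < b" "b \<le> 1" using PD[OF P] by auto
    have \<gamma>C: "\<gamma> \<in> C" using PD[OF P] by simp
    have cg: "continuous_map (top_of_set {0..1}) X \<gamma>" using bC(1) \<gamma>C by blast
    have fimg: "f ` {0..1} = \<gamma> ` {a..b}" using imgP[OF P] fd by simp
    have noE: "\<gamma> t \<notin> E" if t: "t \<in> {a<..<b}" for t
    proof
      assume "\<gamma> t \<in> E"
      moreover have "t \<in> {0<..<1}" using t ab by auto
      ultimately have "t \<in> F \<gamma>" unfolding F_def by blast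
      then show False using PD(5)[OF P] t by blast
    qed
    have nobr1: "\<forall>t\<in>{a<..<b}. \<forall>\<delta>\<in>C1. \<gamma> t \<noteq> \<delta> 0 \<and> \<gamma> t \<noteq> \<delta> 1"
    proof (intro ballI)
      fix t \<delta> assume "t \<in> {a<..<b}" "\<delta> \<in> C1"
      then show "\<gamma> t \<noteq> \<delta> 0 \<and> \<gamma> t \<noteq> \<delta> 1" using noE[of t] unfolding E_def by blast
    qed
    have nobr2: "\<forall>t\<in>{a<..<b}. \<forall>\<delta>\<in>C2. \<gamma> t \<noteq> \<delta> 0 \<and> \<gamma> t \<noteq> \<delta> 1"
    proof (intro ballI)
      fix t \<delta> assume "t \<in> {a<..<b}" "\<delta> \<in> C2"
      then show "\<gamma> t \<noteq> \<delta> 0 \<and> \<gamma> t \<noteq> \<delta> 1" using noE[of t] unfolding E_def by blast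
    qed
    define S1 where "S1 = {t\<in>{0..1}. \<gamma> t \<in> (\<Union>\<delta>\<in>C1. \<delta> ` {0..1})}"
    define S2 where "S2 = {t\<in>{0..1}. \<gamma> t \<in> (\<Union>\<delta>\<in>C2. \<delta> ` {0..1})}"
    have D1: "{a<..<b} \<subseteq> S1 \<or> {a<..<b} \<inter> S1 = {}" unfolding S1_def
      by (rule dichotomy[OF H finC bC(1) bC(2) \<gamma>C c1(1) b1(1) b1(3) sub1 ab nobr1])
    have D2: "{a<..<b} \<subseteq> S2 \<or> {a<..<b} \<inter> S2 = {}" unfolding S2_def
      by (rule dichotomy[OF H finC bC(1) bC(2) \<gamma>C c2(1) b2(1) b2(3) sub2 ab nobr2])
    have cl1: "closed S1" unfolding S1_def by (rule closed_pre[OF H c1(1) b1(1) cg])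
    have cl2: "closed S2" unfolding S2_def by (rule closed_pre[OF H c2(1) b2(1) cg])
    have S1G: "t \<in> S1 \<longleftrightarrow> t \<in> {0..1} \<and> \<gamma> t \<in> \<Gamma>1" for t unfolding S1_def G1 by simp
    have S2G: "t \<in> S2 \<longleftrightarrow> t \<in> {0..1} \<and> \<gamma> t \<in> \<Gamma>2" for t unfolding S2_def G2 by simp
    have sub01: "{a..b} \<subseteq> {0..1}" "{a<..<b} \<subseteq> {0..1}" using ab by auto
    have cov: "t \<in> S1 \<or> t \<in> S2" if "t \<in> {a..b}" for t
    proof -
      have t01: "t \<in> {0..1}" using that sub01 by blast
      then have "\<gamma> t \<in> \<Gamma>1 \<union> \<Gamma>2" using GU \<gamma>C by blast
      then show ?thesis using S1G S2G t01 by blast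
    qed
    have clab: "closure {a<..<b} = {a..b}" using ab by simp
    have icl: "\<gamma> ` {a..b} \<subseteq> X closure_of (\<gamma> ` {a<..<b})" by (rule img_closure[OF cg ab])
    from D1 show ?thesis
    proof
      assume in1: "{a<..<b} \<subseteq> S1"
      from D2 show ?thesis
      proof
        assume in2: "{a<..<b} \<subseteq> S2"
        have "{a..b} \<subseteq> S1" using closure_minimal[OF in1 cl1] clab by simp
        moreover have "{a..b} \<subseteq> S2" using closure_minimal[OF in2 cl2] clab by simp
        ultimately have "\<gamma> ` {a..b} \<subseteq> \<Gamma>1 \<inter> \<Gamma>2" using S1G S2G by blast
        then show ?thesis using fimg by simp
      next
        assume out2: "{a<..<b} \<inter> S2 = {}"
        have "\<gamma> ` {a<..<b} \<subseteq> \<Gamma>1 - \<Gamma>2"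
        proof
          fix p assume "p \<in> \<gamma> ` {a<..<b}"
          then obtain t where t: "t \<in> {a<..<b}" "p = \<gamma> t" by blast
          then have "t \<in> S1" "t \<notin> S2" using in1 out2 by blast+
          then show "p \<in> \<Gamma>1 - \<Gamma>2" using S1G S2G t sub01 by blast
        qed
        then have "X closure_of (\<gamma> ` {a<..<b}) \<subseteq> X closure_of (\<Gamma>1 - \<Gamma>2)" by (rule closure_of_mono)
        then show ?thesis using icl fimg by blast
      qed
    next
      assume out1: "{a<..<b} \<inter> S1 = {}"
      from D2 show ?thesis
      proof
        assume in2: "{a<..<b} \<subseteq> S2"
        have "\<gamma> ` {a<..<b} \<subseteq> \<Gamma>2 - \<Gamma>1"
        proof
          fix p assume "p \<in> \<gamma> ` {a<..<b}"
          then obtain t where t: "t \<in> {a<..<b}" "p = \<gamma> t" by blast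
          then have "t \<in> S2" "t \<notin> S1" using in2 out1 by blast+
          then show "p \<in> \<Gamma>2 - \<Gamma>1" using S1G S2G t sub01 by blast
        qed
        then have "X closure_of (\<gamma> ` {a<..<b}) \<subseteq> X closure_of (\<Gamma>2 - \<Gamma>1)" by (rule closure_of_mono)
        then show ?thesis using icl fimg by blast
      next
        assume out2: "{a<..<b} \<inter> S2 = {}"
        have m: "(a+b)/2 \<in> {a<..<b}" using ab by auto
        then have "(a+b)/2 \<in> {a..b}" by auto
        then have "(a+b)/2 \<in> S1 \<or> (a+b)/2 \<in> S2" by (rule cov)
        then show ?thesis using m out1 out2 by blast
      qed
    qed
  qed
  show ?thesis
    using cut' unionC' clos by blast
qed


end
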